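(* Suppose the quadratic vector equation $Mx=a+b(x,x)$ has a minimal solution $x_\ast$ with $x_\ast>0$ (every component strictly positive). Then $\rho\big(M^{-1}(b(x_\ast,\cdot)+b(\cdot,x_\ast))\big)\leq 1$, and consequently $F'_{x_\ast}=M-b(x_\ast,\cdot)-b(\cdot,x_\ast)$ is an M-matrix.
   Context: Inequalities between vectors/matrices are componentwise. A Z-matrix is a real square matrix with nonpositive off-diagonal entries; an M-matrix is a matrix $sI-P$ with $P\geq0$ entrywise and $s\geq\rho(P)$ ($\rho$ = spectral radius). Let $M\in\mathbb R^{n\times n}$ be a nonsingular M-matrix, $a\in\mathbb R^n$ with $a\geq 0$, and $b:\mathbb R^n\times\mathbb R^n\to\mathbb R^n$ a bilinear map (not necessarily symmetric) with $b(x,y)\geq 0$ whenever $x,y\geq 0$. A solution of $Mx=a+b(x,x)$ means a vector $x\geq 0$ satisfying it; a solution $x_\ast$ is minimal if $x_\ast\leq y$ for every solution $y$. For $x\in\mathbb R^n$, $b(x,\cdot)$ and $b(\cdot,x)$ denote the $n\times n$ matrices of $y\mapsto b(x,y)$ and $y\mapsto b(y,x)$; $F'_x:=M-b(x,\cdot)-b(\cdot,x)$ is the Jacobian of $F(x):=Mx-a-b(x,x)$. *)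

theory Defs
  imports "Jordan_Normal_Form.Spectral_Radius"
begin

definition nonneg_vec :: "real vec \<Rightarrow> bool" where
  "nonneg_vec v \<longleftrightarrow> (\<forall>i < dim_vec v. v $ i \<ge> 0)"

definition pos_vec :: "real vec \<Rightarrow> bool" where
  "pos_vec v \<longleftrightarrow> (\<forall>i < dim_vec v. v $ i > 0)"

definition nonneg_mat :: "real mat \<Rightarrow> bool" where
  "nonneg_mat A \<longleftrightarrow> (\<forall>i < dim_row A. \<forall>j < dim_col A. A $$ (i, j) \<ge> 0)"

definition rho :: "real mat \<Rightarrow> real" where
  "rho A = spectral_radius (map_mat complex_of_real A)"

definition M_matrix :: "nat \<Rightarrow> real mat \<Rightarrow> bool" where
  "M_matrix n A \<longleftrightarrow> A \<in> carrier_mat n n \<and>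
     (\<exists>s P. P \<in> carrier_mat n n \<and> nonneg_mat P \<and> s \<ge> rho P \<and> A = s \<cdot>\<^sub>m 1\<^sub>m n - P)"

definition nonsingular_M_matrix :: "nat \<Rightarrow> real mat \<Rightarrow> bool" where
  "nonsingular_M_matrix n A \<longleftrightarrow> M_matrix n A \<and> invertible_mat A"

definition minv :: "real mat \<Rightarrow> real mat" where
  "minv A = (SOME B. inverts_mat A B \<and> inverts_mat B A)"

definition bilinear_vec :: "nat \<Rightarrow> (real vec \<Rightarrow> real vec \<Rightarrow> real vec) \<Rightarrow> bool" where
  "bilinear_vec n b \<longleftrightarrow>
     (\<forall>x \<in> carrier_vec n. \<forall>y \<in> carrier_vec n. b x y \<in> carrier_vec n) \<and>
     (\<forall>x \<in> carrier_vec n. \<forall>y \<in> carrier_vec n. \<forall>z \<in> carrier_vec n. \<forall>c::real.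
        b (x + y) z = b x z + b y z \<and> b (c \<cdot>\<^sub>v x) z = c \<cdot>\<^sub>v b x z \<and>
        b z (x + y) = b z x + b z y \<and> b z (c \<cdot>\<^sub>v x) = c \<cdot>\<^sub>v b z x)"

text \<open>Matrices of y \<mapsto> b(x,y) and y \<mapsto> b(y,x).\<close>
definition b_left :: "nat \<Rightarrow> (real vec \<Rightarrow> real vec \<Rightarrow> real vec) \<Rightarrow> real vec \<Rightarrow> real mat" where
  "b_left n b x = mat n n (\<lambda>(i, j). b x (unit_vec n j) $ i)"

definition b_right :: "nat \<Rightarrow> (real vec \<Rightarrow> real vec \<Rightarrow> real vec) \<Rightarrow> real vec \<Rightarrow> real mat" where
  "b_right n b x = mat n n (\<lambda>(i, j). b (unit_vec n j) x $ i)"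

definition qve_solution :: "nat \<Rightarrow> real mat \<Rightarrow> real vec \<Rightarrow> (real vec \<Rightarrow> real vec \<Rightarrow> real vec) \<Rightarrow> real vec \<Rightarrow> bool" where
  "qve_solution n M a b x \<longleftrightarrow> x \<in> carrier_vec n \<and> nonneg_vec x \<and> M *\<^sub>v x = a + b x x"

definition qve_minimal_solution :: "nat \<Rightarrow> real mat \<Rightarrow> real vec \<Rightarrow> (real vec \<Rightarrow> real vec \<Rightarrow> real vec) \<Rightarrow> real vec \<Rightarrow> bool" where
  "qve_minimal_solution n M a b x \<longleftrightarrow> qve_solution n M a b x \<and>
     (\<forall>y. qve_solution n M a b y \<longrightarrow> (\<forall>i < n. x $ i \<le> y $ i))"

end

theory Submission imports Defs begin

lemma mv_index:
  assumes "A \<in> carrier_mat n m" "v \<in> carrier_vec m" "i < n"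
  shows "(A *\<^sub>v v) $ i = (\<Sum>j<m. A $$ (i,j) * v $ j)"
  using assms by (simp add: scalar_prod_def atLeast0LessThan)

context fixes n b assumes b: "bilinear_vec n b" begin
lemma bc: "x \<in> carrier_vec n \<Longrightarrow> y \<in> carrier_vec n \<Longrightarrow> b x y \<in> carrier_vec n"
  using b unfolding bilinear_vec_def by blast
lemma bdim: "x \<in> carrier_vec n \<Longrightarrow> y \<in> carrier_vec n \<Longrightarrow> dim_vec (b x y) = n"
  using bc carrier_vecD by blast
lemma badd_l: "x \<in> carrier_vec n \<Longrightarrow> y \<in> carrier_vec n \<Longrightarrow> z \<in> carrier_vec n \<Longrightarrow> b (x+y) z = b x z + b y z"
  using b unfolding bilinear_vec_def by blast
lemma badd_r: "x \<in> carrier_vec n \<Longrightarrow> y \<in> carrier_vec n \<Longrightarrow> z \<in> carrier_vec n \<Longrightarrow> b z (x+y) = b z x + b z y"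
  using b unfolding bilinear_vec_def by blast
lemma bsm_l: "x \<in> carrier_vec n \<Longrightarrow> z \<in> carrier_vec n \<Longrightarrow> b (c \<cdot>\<^sub>v x) z = c \<cdot>\<^sub>v b x z"
  using b unfolding bilinear_vec_def by blast
lemma bsm_r: "x \<in> carrier_vec n \<Longrightarrow> z \<in> carrier_vec n \<Longrightarrow> b z (c \<cdot>\<^sub>v x) = c \<cdot>\<^sub>v b z x"
  using b unfolding bilinear_vec_def by blast
lemma bzero_r: "x \<in> carrier_vec n \<Longrightarrow> b x (0\<^sub>v n) = 0\<^sub>v n"
proof -
  assume x: "x \<in> carrier_vec n"
  have "b x (0\<^sub>v n) = b x (0 \<cdot>\<^sub>v 0\<^sub>v n)" by (rule arg_cong[where f="b x"], intro eq_vecI, auto)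
  also have "\<dots> = 0 \<cdot>\<^sub>v b x (0\<^sub>v n)" using bsm_r[OF _ x, of "0\<^sub>v n"] by simp
  also have "\<dots> = 0\<^sub>v n" using bc[OF x, of "0\<^sub>v n"] by (intro eq_vecI) auto
  finally show ?thesis .
qed
lemma bzero_l: "x \<in> carrier_vec n \<Longrightarrow> b (0\<^sub>v n) x = 0\<^sub>v n"
proof -
  assume x: "x \<in> carrier_vec n"
  have "b (0\<^sub>v n) x = b (0 \<cdot>\<^sub>v 0\<^sub>v n) x" by (rule arg_cong[where f="\<lambda>v. b v x"], intro eq_vecI, auto)
  also have "\<dots> = 0 \<cdot>\<^sub>v b (0\<^sub>v n) x" using bsm_l[OF _ x, of "0\<^sub>v n"] by simp
  also have "\<dots> = 0\<^sub>v n" using bc[OF _ x, of "0\<^sub>v n"] by (intro eq_vecI) auto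
  finally show ?thesis .
qed

lemma bleft_mult:
  assumes x: "x \<in> carrier_vec n" and u: "u \<in> carrier_vec n"
  shows "b_left n b x *\<^sub>v u = b x u"
proof -
  define vk where "vk k = vec n (\<lambda>i. if i < k then u $ i else 0)" for k
  have vkc: "vk k \<in> carrier_vec n" for k unfolding vk_def by simp
  have main: "k \<le> n \<Longrightarrow> b x (vk k) = vec n (\<lambda>i. \<Sum>j<k. u $ j * b x (unit_vec n j) $ i)" for k
  proof (induction k)
    case 0
    have "vk 0 = 0\<^sub>v n" unfolding vk_def by (intro eq_vecI) auto
    then show ?case using bzero_r[OF x] by (intro eq_vecI) auto
  next
    case (Suc k)
    have e: "vk (Suc k) = vk k + (u $ k) \<cdot>\<^sub>v unit_vec n k" unfolding vk_def
      using Suc(2) by (intro eq_vecI) (auto simp: unit_vec_def less_Suc_eq)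
    have e2: "b x (vk (Suc k)) = b x (vk k) + (u $ k) \<cdot>\<^sub>v b x (unit_vec n k)"
      unfolding e using badd_r[OF vkc _ x] bsm_r[OF unit_vec_carrier x] by simp
    show ?case unfolding e2 Suc(1)[OF Suc_leD[OF Suc(2)]]
      using bc[OF x unit_vec_carrier] by (intro eq_vecI) (auto simp: algebra_simps bdim[OF x] unit_vec_carrier)
  qed
  have "vk n = u" unfolding vk_def using u by (intro eq_vecI) auto
  with main[of n] have "b x u = vec n (\<lambda>i. \<Sum>j<n. u $ j * b x (unit_vec n j) $ i)" by simp
  moreover have "b_left n b x *\<^sub>v u = vec n (\<lambda>i. \<Sum>j<n. u $ j * b x (unit_vec n j) $ i)"
    unfolding b_left_def using u by (intro eq_vecI) (auto simp: scalar_prod_def atLeast0LessThan mult.commute)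
  ultimately show ?thesis by simp
qed

lemma bright_mult:
  assumes x: "x \<in> carrier_vec n" and u: "u \<in> carrier_vec n"
  shows "b_right n b x *\<^sub>v u = b u x"
proof -
  define vk where "vk k = vec n (\<lambda>i. if i < k then u $ i else 0)" for k
  have vkc: "vk k \<in> carrier_vec n" for k unfolding vk_def by simp
  have main: "k \<le> n \<Longrightarrow> b (vk k) x = vec n (\<lambda>i. \<Sum>j<k. u $ j * b (unit_vec n j) x $ i)" for k
  proof (induction k)
    case 0
    have "vk 0 = 0\<^sub>v n" unfolding vk_def by (intro eq_vecI) auto
    then show ?case using bzero_l[OF x] by (intro eq_vecI) auto
  next
    case (Suc k)
    have e: "vk (Suc k) = vk k + (u $ k) \<cdot>\<^sub>v unit_vec n k" unfolding vk_def
      using Suc(2) by (intro eq_vecI) (auto simp: unit_vec_def less_Suc_eq)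
    have e2: "b (vk (Suc k)) x = b (vk k) x + (u $ k) \<cdot>\<^sub>v b (unit_vec n k) x"
      unfolding e using badd_l[OF vkc _ x] bsm_l[OF unit_vec_carrier x] by simp
    show ?case unfolding e2 Suc(1)[OF Suc_leD[OF Suc(2)]]
      using bc[OF unit_vec_carrier x] by (intro eq_vecI) (auto simp: algebra_simps bdim[OF _ x] unit_vec_carrier)
  qed
  have "vk n = u" unfolding vk_def using u by (intro eq_vecI) auto
  with main[of n] have "b u x = vec n (\<lambda>i. \<Sum>j<n. u $ j * b (unit_vec n j) x $ i)" by simp
  moreover have "b_right n b x *\<^sub>v u = vec n (\<lambda>i. \<Sum>j<n. u $ j * b (unit_vec n j) x $ i)"
    unfolding b_right_def using u by (intro eq_vecI) (auto simp: scalar_prod_def atLeast0LessThan mult.commute)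
  ultimately show ?thesis by simp
qed
end

lemma rho_le:
  assumes A: "A \<in> carrier_mat n n" and n: "n > 0"
    and ev: "\<And>z l. eigenvector (map_mat complex_of_real A) z l \<Longrightarrow> cmod l \<le> c"
  shows "rho A \<le> c"
proof -
  have Ac: "map_mat complex_of_real A \<in> carrier_mat n n" using A by simp
  from spectral_radius_mem_max(1)[OF Ac n] obtain l where
    l: "l \<in> spectrum (map_mat complex_of_real A)" and r: "rho A = cmod l"
    unfolding rho_def by auto
  from l obtain z where "eigenvector (map_mat complex_of_real A) z l"
    unfolding spectrum_def eigenvalue_def by auto
  from ev[OF this] r show ?thesis by simp
qed

lemma cbound:
  assumes Q: "Q \<in> carrier_mat n n" and nn: "nonneg_mat Q" and z: "z \<in> carrier_vec n" and i: "i < n"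
  shows "cmod ((map_mat complex_of_real Q *\<^sub>v z) $ i) \<le> (Q *\<^sub>v vec n (\<lambda>j. cmod (z $ j))) $ i"
proof -
  have "(map_mat complex_of_real Q *\<^sub>v z) $ i = (\<Sum>j<n. complex_of_real (Q $$ (i,j)) * z $ j)"
    using Q z i by (subst mv_index[of _ n n]) auto
  moreover have "(Q *\<^sub>v vec n (\<lambda>j. cmod (z $ j))) $ i = (\<Sum>j<n. Q $$ (i,j) * cmod (z $ j))"
    using Q z i by (subst mv_index[of _ n n]) auto
  moreover have "cmod (\<Sum>j<n. complex_of_real (Q $$ (i,j)) * z $ j) \<le> (\<Sum>j<n. cmod (complex_of_real (Q $$ (i,j)) * z $ j))"
    by (rule norm_sum)
  moreover have "cmod (complex_of_real (Q $$ (i,j)) * z $ j) = Q $$ (i,j) * cmod (z $ j)" if "j < n" for j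
  proof -
    have "Q $$ (i,j) \<ge> 0" using nn Q i that unfolding nonneg_mat_def by auto
    then show ?thesis by (simp add: norm_mult)
  qed
  ultimately show ?thesis by simp
qed

lemma tarski_box:
  fixes H :: "real vec \<Rightarrow> real vec"
  assumes y: "y \<in> carrier_vec n" "\<And>i. i < n \<Longrightarrow> 0 \<le> y $ i"
    and mono: "\<And>x x' i. x \<in> carrier_vec n \<Longrightarrow> x' \<in> carrier_vec n \<Longrightarrow> (\<forall>i<n. 0 \<le> x $ i) \<Longrightarrow>
       (\<forall>i<n. x $ i \<le> x' $ i) \<Longrightarrow> i < n \<Longrightarrow> H x $ i \<le> H x' $ i"
    and Hc: "\<And>x. x \<in> carrier_vec n \<Longrightarrow> H x \<in> carrier_vec n"
    and Hnn: "\<And>x i. x \<in> carrier_vec n \<Longrightarrow> (\<forall>i<n. 0 \<le> x $ i) \<Longrightarrow> i < n \<Longrightarrow> 0 \<le> H x $ i"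
    and Hy: "\<And>i. i < n \<Longrightarrow> H y $ i \<le> y $ i"
  shows "\<exists>z \<in> carrier_vec n. (\<forall>i<n. 0 \<le> z $ i \<and> z $ i \<le> y $ i) \<and> H z = z"
proof -
  define S where "S = {w \<in> carrier_vec n. (\<forall>i<n. 0 \<le> w $ i \<and> w $ i \<le> y $ i) \<and> (\<forall>i<n. H w $ i \<le> w $ i)}"
  define z where "z = vec n (\<lambda>i. Inf ((\<lambda>w. w $ i) ` S))"
  have yS: "y \<in> S" unfolding S_def using y Hy by auto
  have bdd: "bdd_below ((\<lambda>w. w $ i) ` S)" if "i < n" for i
    unfolding S_def using that by (intro bdd_belowI[of _ 0]) auto
  have zc: "z \<in> carrier_vec n" unfolding z_def by simp
  have zle: "z $ i \<le> w $ i" if "w \<in> S" "i < n" for w i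
    unfolding z_def using that bdd by (auto intro: cInf_lower)
  have zge: "z $ i \<ge> c" if "i < n" "\<And>w. w \<in> S \<Longrightarrow> c \<le> w $ i" for i c
    unfolding z_def using that yS by (auto intro!: cInf_greatest)
  have z0: "\<forall>i<n. 0 \<le> z $ i" using zge unfolding S_def by auto
  have zy: "\<forall>i<n. z $ i \<le> y $ i" using zle yS by auto
  have Hzz: "\<forall>i<n. H z $ i \<le> z $ i"
  proof (intro allI impI)
    fix i assume i: "i < n"
    show "H z $ i \<le> z $ i"
    proof (rule zge[OF i])
      fix w assume w: "w \<in> S"
      have "H z $ i \<le> H w $ i" using mono[OF zc _ z0 _ i, of w] w zle unfolding S_def by auto
      also have "\<dots> \<le> w $ i" using w i unfolding S_def by auto
      finally show "H z $ i \<le> w $ i" .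
    qed
  qed
  have Hzc: "H z \<in> carrier_vec n" using Hc zc .
  have Hz0: "\<forall>i<n. 0 \<le> H z $ i" using Hnn[OF zc z0] by auto
  have "H z \<in> S" unfolding S_def using Hzc Hz0 Hzz zy mono[OF Hzc zc Hz0 Hzz] by force
  then have "\<forall>i<n. z $ i \<le> H z $ i" using zle by auto
  with Hzz have "H z = z" using Hzc zc by (intro eq_vecI) (auto intro: antisym)
  then show ?thesis using zc z0 zy by auto
qed


lemma Mv_index:
  fixes P :: "'a::comm_ring_1 mat"
  assumes P: "P \<in> carrier_mat n n" and v: "v \<in> carrier_vec n" and i: "i < n"
  shows "((s \<cdot>\<^sub>m 1\<^sub>m n - P) *\<^sub>v v) $ i = s * v $ i - (P *\<^sub>v v) $ i"
proof -
  have "((s \<cdot>\<^sub>m 1\<^sub>m n - P) *\<^sub>v v) $ i = (\<Sum>j<n. (s * (if i = j then 1 else 0) - P $$ (i,j)) * v $ j)"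
    using P v i by (subst mv_index[of _ n n]) auto
  also have "\<dots> = (\<Sum>j<n. (if i = j then s * v $ j else 0)) - (\<Sum>j<n. P $$ (i,j) * v $ j)"
  proof -
    have "(s * (if i = j then 1 else 0) - P $$ (i,j)) * v $ j = (if i = j then s * v $ j else 0) - P $$ (i,j) * v $ j" for j
      by (auto simp: algebra_simps)
    then show ?thesis by (simp only: sum_subtractf[symmetric])
  qed
  also have "\<dots> = s * v $ i - (P *\<^sub>v v) $ i"
    using P v i by (subst mv_index[of _ n n]) (auto simp: sum.delta)
  finally show ?thesis .
qed

lemma Pv_nonneg:
  fixes P :: "real mat"
  assumes P: "P \<in> carrier_mat n n" "nonneg_mat P" and v: "v \<in> carrier_vec n" "\<forall>j<n. 0 \<le> v $ j" and i: "i < n"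
  shows "0 \<le> (P *\<^sub>v v) $ i"
  using P v i unfolding nonneg_mat_def by (subst mv_index[of _ n n]) (auto intro!: sum_nonneg)

lemma Pv_mono:
  fixes P :: "real mat"
  assumes P: "P \<in> carrier_mat n n" "nonneg_mat P" and v: "v \<in> carrier_vec n" "w \<in> carrier_vec n"
    "\<forall>j<n. v $ j \<le> w $ j" and i: "i < n"
  shows "(P *\<^sub>v v) $ i \<le> (P *\<^sub>v w) $ i"
  using P v i unfolding nonneg_mat_def by (subst (1 2) mv_index[of _ n n]) (auto intro!: sum_mono mult_left_mono)


lemma key:
  fixes b :: "real vec \<Rightarrow> real vec \<Rightarrow> real vec"
  assumes n: "n > 0"
    and b: "bilinear_vec n b"
    and bposO: "\<forall>x y. x \<in> carrier_vec n \<longrightarrow> y \<in> carrier_vec n \<longrightarrow>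
                 nonneg_vec x \<longrightarrow> nonneg_vec y \<longrightarrow> nonneg_vec (b x y)"
    and a: "a \<in> carrier_vec n" "nonneg_vec a"
    and P: "P \<in> carrier_mat n n" "nonneg_mat P"
    and s: "s > 0"
    and Meq: "M = s \<cdot>\<^sub>m 1\<^sub>m n - P"
    and xs: "qve_minimal_solution n M a b xs"
    and xpos: "pos_vec xs"
    and u: "u \<in> carrier_vec n" "\<forall>i<n. 0 \<le> u $ i" "u \<noteq> 0\<^sub>v n"
    and r: "\<forall>i<n. b xs u $ i + b u xs $ i - s * u $ i + (P *\<^sub>v u) $ i \<ge> 0 \<and>
              (b xs u $ i + b u xs $ i - s * u $ i + (P *\<^sub>v u) $ i = 0 \<longrightarrow> b xs u $ i + b u xs $ i = 0)"
  shows False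
proof -
  have bpos: "nonneg_vec (b x y)" if "x \<in> carrier_vec n" "y \<in> carrier_vec n" "nonneg_vec x" "nonneg_vec y" for x y
    using bposO that by blast
  define rr where "rr i = b xs u $ i + b u xs $ i - s * u $ i + (P *\<^sub>v u) $ i" for i
  have xc: "xs \<in> carrier_vec n" and xeq: "M *\<^sub>v xs = a + b xs xs"
    and xmin: "\<And>y. qve_solution n M a b y \<Longrightarrow> \<forall>i<n. xs $ i \<le> y $ i"
    using xs unfolding qve_minimal_solution_def qve_solution_def by auto
  have xp: "\<And>i. i < n \<Longrightarrow> xs $ i > 0" using xpos xc unfolding pos_vec_def by auto
  have nnv: "nonneg_vec v" if "v \<in> carrier_vec n" "\<forall>i<n. 0 \<le> v $ i" for v
    using that unfolding nonneg_vec_def by auto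
  have bnn: "0 \<le> b x y $ i" if "x \<in> carrier_vec n" "y \<in> carrier_vec n" "\<forall>i<n. 0 \<le> x $ i"
     "\<forall>i<n. 0 \<le> y $ i" "i < n" for x y i
    using bpos[OF that(1,2) nnv[OF that(1,3)] nnv[OF that(2,4)]] that(5) bdim[OF b that(1,2)]
    unfolding nonneg_vec_def by auto
  have an: "\<And>i. i < n \<Longrightarrow> 0 \<le> a $ i" using a unfolding nonneg_vec_def by auto
  have xsol: "s * xs $ i - (P *\<^sub>v xs) $ i = a $ i + b xs xs $ i" if "i < n" for i
  proof -
    have "(M *\<^sub>v xs) $ i = (a + b xs xs) $ i" using xeq by simp
    then show ?thesis unfolding Meq using Mv_index[OF P(1) xc that] that a bdim[OF b xc xc] by simp
  qed
  define c where "c = Min ((\<lambda>i. xs $ i / (u $ i + 1)) ` {..<n})"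
  have cpos: "c > 0" unfolding c_def using n xp u(2)
    by (subst Min_gr_iff) (auto intro!: divide_pos_pos add_nonneg_pos)
  have cu: "c * u $ i \<le> xs $ i" if i: "i < n" for i
  proof -
    have "c \<le> xs $ i / (u $ i + 1)" unfolding c_def using i by (intro Min_le) auto
    then have "c * (u $ i + 1) \<le> xs $ i" using u(2) i by (simp add: pos_le_divide_eq add_nonneg_pos)
    then show ?thesis using cpos by (simp add: algebra_simps)
  qed
  have buu0: "0 \<le> b u u $ i" if "i < n" for i using bnn[OF u(1) u(1) u(2) u(2) that] .
  have bxu0: "0 \<le> b xs u $ i" if "i < n" for i using bnn[OF xc u(1) _ u(2) that] xp by (auto intro: less_imp_le)
  have bux0: "0 \<le> b u xs $ i" if "i < n" for i using bnn[OF u(1) xc u(2) _ that] xp by (auto intro: less_imp_le)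
  have cbuu: "c * b u u $ i \<le> b xs u $ i" if i: "i < n" for i
  proof -
    define w where "w = xs + (-c) \<cdot>\<^sub>v u"
    have wc: "w \<in> carrier_vec n" unfolding w_def using xc u by simp
    have w0: "\<forall>i<n. 0 \<le> w $ i" unfolding w_def using xc u cu by auto
    have "b w u = b xs u + (-c) \<cdot>\<^sub>v b u u" unfolding w_def
      using badd_l[OF b xc _ u(1), of "(-c) \<cdot>\<^sub>v u"] bsm_l[OF b u(1) u(1)] u by simp
    then have "b w u $ i = b xs u $ i - c * b u u $ i" using i bdim[OF b u(1) u(1)] bdim[OF b xc u(1)] by simp
    with bnn[OF wc u(1) w0 u(2) i] show ?thesis by simp
  qed
  have zero_case: "b u u $ i = 0" if i: "i < n" and "rr i = 0" for i
  proof -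
    have "b xs u $ i + b u xs $ i = 0" using r i that(2) unfolding rr_def by auto
    with bxu0[OF i] bux0[OF i] have "b xs u $ i = 0" by linarith
    with cbuu[OF i] cpos buu0[OF i] show ?thesis by (smt (verit) mult_pos_pos)
  qed
  define t where "t = Min (insert c ((\<lambda>i. rr i / (b u u $ i + 1)) ` {i. i < n \<and> rr i > 0}))"
  have tpos: "t > 0" unfolding t_def using cpos buu0
    by (subst Min_gr_iff) (auto intro!: divide_pos_pos add_nonneg_pos)
  have tc: "t \<le> c" unfolding t_def by (intro Min_le) auto
  have tr: "t * (b u u $ i + 1) \<le> rr i" if "i < n" "rr i > 0" for i
  proof -
    have "t \<le> rr i / (b u u $ i + 1)" unfolding t_def using that by (intro Min_le) auto
    then show ?thesis using buu0[OF that(1)] by (simp add: pos_le_divide_eq add_nonneg_pos)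
  qed
  define y where "y = xs + (-t) \<cdot>\<^sub>v u"
  have yc: "y \<in> carrier_vec n" unfolding y_def using xc u by simp
  have yi: "y $ i = xs $ i - t * u $ i" if "i < n" for i unfolding y_def using that xc u by simp
  have y0: "0 \<le> y $ i" if i: "i < n" for i
  proof -
    have "t * u $ i \<le> c * u $ i" using tc u(2) i by (simp add: mult_right_mono)
    with cu[OF i] show ?thesis using yi[OF i] by simp
  qed
  define H where "H x = (1/s) \<cdot>\<^sub>v (a + P *\<^sub>v x + b x x)" for x
  have Hc: "H x \<in> carrier_vec n" if "x \<in> carrier_vec n" for x
    unfolding H_def using that a P bc[OF b that that] by auto
  have Hi: "H x $ i = (a $ i + (P *\<^sub>v x) $ i + b x x $ i) / s" if "x \<in> carrier_vec n" "i < n" for x i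
    unfolding H_def using that a P bdim[OF b that(1) that(1)] by simp
  have Hnn: "0 \<le> H x $ i" if "x \<in> carrier_vec n" "\<forall>i<n. 0 \<le> x $ i" "i < n" for x i
    unfolding Hi[OF that(1,3)] using s an[OF that(3)] Pv_nonneg[OF P that(1,2,3)] bnn[OF that(1,1,2,2,3)]
    by simp
  have Hmono: "H x $ i \<le> H x' $ i" if xx: "x \<in> carrier_vec n" "x' \<in> carrier_vec n" "\<forall>i<n. 0 \<le> x $ i"
       "\<forall>i<n. x $ i \<le> x' $ i" "i < n" for x x' i
  proof -
    define d where "d = x' - x"
    have dc: "d \<in> carrier_vec n" unfolding d_def using xx by simp
    have d0: "\<forall>i<n. 0 \<le> d $ i" unfolding d_def using xx by auto
    have x'0: "\<forall>i<n. 0 \<le> x' $ i" using xx by (meson order_trans)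
    have x'e: "x' = x + d" unfolding d_def using xx by (intro eq_vecI) auto
    have "b x' x' = b x (x + d) + b d (x + d)" unfolding x'e using badd_l[OF b xx(1) dc] dc xx by simp
    also have "\<dots> = b x x + b x d + (b d x + b d d)" using badd_r[OF b xx(1) dc] xx dc by simp
    finally have "b x' x' $ i = b x x $ i + b x d $ i + b d x $ i + b d d $ i"
      using xx(5) bdim[OF b] xx(1) dc by simp
    moreover have "0 \<le> b x d $ i" "0 \<le> b d x $ i" "0 \<le> b d d $ i"
      using bnn[OF xx(1) dc xx(3) d0 xx(5)] bnn[OF dc xx(1) d0 xx(3) xx(5)] bnn[OF dc dc d0 d0 xx(5)] by auto
    ultimately have "b x x $ i \<le> b x' x' $ i" by linarith
    moreover have "(P *\<^sub>v x) $ i \<le> (P *\<^sub>v x') $ i" using Pv_mono[OF P xx(1,2,4,5)] .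
    ultimately show ?thesis unfolding Hi[OF xx(1) xx(5)] Hi[OF xx(2) xx(5)] using s
      by (intro divide_right_mono) auto
  qed
  have Hy: "H y $ i \<le> y $ i" if i: "i < n" for i
  proof -
    have Py: "(P *\<^sub>v y) $ i = (P *\<^sub>v xs) $ i - t * (P *\<^sub>v u) $ i"
      unfolding y_def using P xc u i by (simp add: mult_add_distrib_mat_vec[of P n n] mult_mat_vec[of P n n])
    have uc': "(-t) \<cdot>\<^sub>v u \<in> carrier_vec n" using u by simp
    have "b y y = b xs (xs + (-t) \<cdot>\<^sub>v u) + b ((-t) \<cdot>\<^sub>v u) (xs + (-t) \<cdot>\<^sub>v u)"
      unfolding y_def using badd_l[OF b xc uc'] xc uc' by simp
    also have "\<dots> = b xs xs + b xs ((-t) \<cdot>\<^sub>v u) + (b ((-t) \<cdot>\<^sub>v u) xs + b ((-t) \<cdot>\<^sub>v u) ((-t) \<cdot>\<^sub>v u))"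
      using badd_r[OF b xc uc'] xc uc' by simp
    also have "\<dots> = b xs xs + (-t) \<cdot>\<^sub>v b xs u + ((-t) \<cdot>\<^sub>v b u xs + (-t) \<cdot>\<^sub>v ((-t) \<cdot>\<^sub>v b u u))"
      using bsm_l[OF b u(1)] bsm_r[OF b u(1)] xc uc' u by simp
    finally have byy: "b y y $ i = b xs xs $ i - t * b xs u $ i - t * b u xs $ i + t * t * b u u $ i"
      using i bdim[OF b] xc u by simp
    have "a $ i + (P *\<^sub>v y) $ i + b y y $ i \<le> s * y $ i"
    proof -
      have eq: "s * y $ i - (a $ i + (P *\<^sub>v y) $ i + b y y $ i) = t * rr i - t * t * b u u $ i"
        unfolding Py byy yi[OF i] rr_def using xsol[OF i] by (simp add: algebra_simps)
      have "t * t * b u u $ i \<le> t * rr i"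
      proof (cases "rr i = 0")
        case True then show ?thesis using zero_case[OF i] by simp
      next
        case False
        then have "rr i > 0" using r i unfolding rr_def by auto
        from tr[OF i this] have "t * b u u $ i \<le> rr i" using tpos by (simp add: algebra_simps)
        then show ?thesis using tpos by (simp add: mult.assoc mult_left_mono)
      qed
      with eq show ?thesis by linarith
    qed
    then show ?thesis unfolding Hi[OF yc i] using s by (simp add: divide_le_eq mult.commute)
  qed
  obtain z where zc: "z \<in> carrier_vec n" and zb: "\<forall>i<n. 0 \<le> z $ i \<and> z $ i \<le> y $ i" and Hz: "H z = z"
    using tarski_box[of y n H, OF yc y0 Hmono Hc Hnn Hy] by blast
  have "M *\<^sub>v z = a + b z z"
  proof (rule eq_vecI)
    fix i assume i: "i < dim_vec (a + b z z)"
    then have i': "i < n" using a bdim[OF b zc zc] by simp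
    have "z $ i = (a $ i + (P *\<^sub>v z) $ i + b z z $ i) / s" using Hi[OF zc i'] Hz by simp
    then have "s * z $ i = a $ i + (P *\<^sub>v z) $ i + b z z $ i" using s by (simp add: field_simps)
    then show "(M *\<^sub>v z) $ i = (a + b z z) $ i" unfolding Meq using Mv_index[OF P(1) zc i'] i' a bdim[OF b zc zc] by simp
  qed (use a P zc Meq bdim[OF b zc zc] in simp)
  then have "qve_solution n M a b z" unfolding qve_solution_def using zc zb nnv[OF zc] by auto
  from xmin[OF this] have "\<forall>i<n. u $ i = 0"
    using zb yi u(2) tpos by (smt (verit) mult_pos_pos)
  then have "u = 0\<^sub>v n" using u(1) by (intro eq_vecI) auto
  with u(3) show False by simp
qed


lemma minv_props:
  assumes M: "M \<in> carrier_mat n n" and inv: "invertible_mat M"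
  shows "minv M \<in> carrier_mat n n" "M * minv M = 1\<^sub>m n" "minv M * M = 1\<^sub>m n"
proof -
  from inv have ex: "\<exists>B. inverts_mat M B \<and> inverts_mat B M" unfolding invertible_mat_def by auto
  have h: "inverts_mat M (minv M) \<and> inverts_mat (minv M) M"
    unfolding minv_def by (rule someI_ex[OF ex])
  then have 1: "M * minv M = 1\<^sub>m n" and 2: "minv M * M = 1\<^sub>m (dim_row (minv M))"
    using M unfolding inverts_mat_def by auto
  from 1 have c: "dim_col (minv M) = n" by (metis index_mult_mat(3) index_one_mat(3))
  from 2 M have r: "dim_row (minv M) = n" by (metis carrier_matD(2) index_mult_mat(3) index_one_mat(3))
  show "minv M \<in> carrier_mat n n" using c r by auto
  show "M * minv M = 1\<^sub>m n" by fact
  show "minv M * M = 1\<^sub>m n" using 2 r by simp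
qed

theorem mainTheorem7:
  fixes n :: nat and M :: "real mat" and a xs :: "real vec"
    and b :: "real vec \<Rightarrow> real vec \<Rightarrow> real vec"
  assumes n: "n > 0"
    and M: "nonsingular_M_matrix n M"
    and a: "a \<in> carrier_vec n" "nonneg_vec a"
    and b: "bilinear_vec n b"
    and bpos: "\<And>x y. x \<in> carrier_vec n \<Longrightarrow> y \<in> carrier_vec n \<Longrightarrow>
                 nonneg_vec x \<Longrightarrow> nonneg_vec y \<Longrightarrow> nonneg_vec (b x y)"
    and xs: "qve_minimal_solution n M a b xs"
    and xpos: "pos_vec xs"
  shows "rho (minv M * (b_left n b xs + b_right n b xs)) \<le> 1 \<and>
         M_matrix n (M - b_left n b xs - b_right n b xs)"
proof -
  from M obtain s P where Mc: "M \<in> carrier_mat n n" and P: "P \<in> carrier_mat n n" "nonneg_mat P"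
    and Meq: "M = s \<cdot>\<^sub>m 1\<^sub>m n - P" and inv: "invertible_mat M"
    unfolding nonsingular_M_matrix_def M_matrix_def by blast
  note mi = minv_props[OF Mc inv]
  have xc: "xs \<in> carrier_vec n" and xeq: "M *\<^sub>v xs = a + b xs xs"
    using xs unfolding qve_minimal_solution_def qve_solution_def by auto
  have xp: "\<And>i. i < n \<Longrightarrow> xs $ i > 0" using xpos xc unfolding pos_vec_def by auto
  have x0: "\<forall>i<n. 0 \<le> xs $ i" using xp by (auto intro: less_imp_le)
  have nnv: "nonneg_vec v" if "v \<in> carrier_vec n" "\<forall>i<n. 0 \<le> v $ i" for v
    using that unfolding nonneg_vec_def by auto
  have bnn: "0 \<le> b x y $ i" if "x \<in> carrier_vec n" "y \<in> carrier_vec n" "\<forall>i<n. 0 \<le> x $ i"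
     "\<forall>i<n. 0 \<le> y $ i" "i < n" for x y i
    using bpos[OF that(1,2) nnv[OF that(1,3)] nnv[OF that(2,4)]] that(5) bdim[OF b that(1,2)]
    unfolding nonneg_vec_def by auto
  have an: "\<And>i. i < n \<Longrightarrow> 0 \<le> a $ i" using a unfolding nonneg_vec_def by auto
  have xsol: "s * xs $ i - (P *\<^sub>v xs) $ i = a $ i + b xs xs $ i" if "i < n" for i
  proof -
    have "(M *\<^sub>v xs) $ i = (a + b xs xs) $ i" using xeq by simp
    then show ?thesis unfolding Meq using Mv_index[OF P(1) xc that] that a bdim[OF b xc xc] by simp
  qed
  have spos: "s > 0"
  proof (rule ccontr)
    assume "\<not> s > 0"
    then have s0: "s \<le> 0" by simp
    have Px0: "(P *\<^sub>v xs) $ i = 0" and sx: "s * xs $ i = 0" if i: "i < n" for i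
    proof -
      have "0 \<le> (P *\<^sub>v xs) $ i" using Pv_nonneg[OF P xc x0 i] .
      moreover have "s * xs $ i \<le> 0" using s0 xp[OF i] by (simp add: mult_nonpos_nonneg less_imp_le)
      moreover have "0 \<le> a $ i + b xs xs $ i" using an[OF i] bnn[OF xc xc x0 x0 i] by simp
      ultimately show "(P *\<^sub>v xs) $ i = 0" "s * xs $ i = 0" using xsol[OF i] by linarith+
    qed
    have "P = 0\<^sub>m n n"
    proof (rule eq_matI)
      fix i j assume ij: "i < dim_row (0\<^sub>m n n)" "j < dim_col (0\<^sub>m n n)"
      then have i: "i < n" and j: "j < n" by auto
      have s0: "(\<Sum>k<n. P $$ (i,k) * xs $ k) = 0" using Px0[OF i] mv_index[OF P(1) xc i] by simp
      have nn: "\<And>k. k \<in> {..<n} \<Longrightarrow> 0 \<le> P $$ (i,k) * xs $ k"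
        using P(2) P(1) i x0 unfolding nonneg_mat_def by auto
      have "\<forall>k\<in>{..<n}. P $$ (i,k) * xs $ k = 0"
        using s0 sum_nonneg_eq_0_iff[OF finite_lessThan nn] by simp
      then have "P $$ (i,j) * xs $ j = 0" using j by auto
      then show "P $$ (i,j) = 0\<^sub>m n n $$ (i,j)" using xp[OF j] i j by simp
    qed (use P in auto)
    moreover have "s = 0" using sx[OF n] xp[OF n] by simp
    ultimately have "M = 0\<^sub>m n n" unfolding Meq by (intro eq_matI) auto
    then have "M * minv M = 0\<^sub>m n n" using mi(1) by simp
    then have "(1\<^sub>m n :: real mat) $$ (0,0) = 0\<^sub>m n n $$ (0,0)" using mi(2) by simp
    then show False using n by simp
  qed
  define Bm where "Bm = b_left n b xs + b_right n b xs"
  have Bmc: "Bm \<in> carrier_mat n n" unfolding Bm_def b_left_def b_right_def by simp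
  have Bmnn: "nonneg_mat Bm"
    unfolding nonneg_mat_def Bm_def b_left_def b_right_def
    using bnn[OF xc unit_vec_carrier x0] bnn[OF unit_vec_carrier xc _ x0] by (auto simp: unit_vec_def)
  have Bmu: "Bm *\<^sub>v u = b xs u + b u xs" if "u \<in> carrier_vec n" for u
  proof -
    have c1: "b_left n b xs \<in> carrier_mat n n" "b_right n b xs \<in> carrier_mat n n"
      unfolding b_left_def b_right_def by auto
    show ?thesis unfolding Bm_def add_mult_distrib_mat_vec[OF c1 that] bleft_mult[OF b xc that] bright_mult[OF b xc that] ..
  qed
  have Bmui: "(Bm *\<^sub>v u) $ i = b xs u $ i + b u xs $ i" if "u \<in> carrier_vec n" "i < n" for u i
    using Bmu[OF that(1)] that bdim[OF b xc that(1)] bdim[OF b that(1) xc] by simp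
  have Bmu0: "0 \<le> (Bm *\<^sub>v u) $ i" if "u \<in> carrier_vec n" "\<forall>i<n. 0 \<le> u $ i" "i < n" for u i
    using Bmui[OF that(1,3)] bnn[OF xc that(1) x0 that(2,3)] bnn[OF that(1) xc that(2) x0 that(3)] by simp
  have bposO: "\<forall>x y. x \<in> carrier_vec n \<longrightarrow> y \<in> carrier_vec n \<longrightarrow>
                 nonneg_vec x \<longrightarrow> nonneg_vec y \<longrightarrow> nonneg_vec (b x y)" using bpos by blast
  note keyI = key[OF n b bposO a P spos Meq xs xpos]
  have absv: "vec n (\<lambda>j. cmod (z $ j)) \<in> carrier_vec n \<and> (\<forall>i<n. 0 \<le> vec n (\<lambda>j. cmod (z $ j)) $ i)
     \<and> vec n (\<lambda>j. cmod (z $ j)) \<noteq> 0\<^sub>v n" if "z \<in> carrier_vec n" "z \<noteq> 0\<^sub>v n" for z :: "complex vec"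
  proof -
    from that obtain j where j: "j < n" "z $ j \<noteq> 0"
      by (metis carrier_vecD eq_vecI index_zero_vec(1,2))
    then have "vec n (\<lambda>j. cmod (z $ j)) $ j \<noteq> 0\<^sub>v n $ j" by simp
    then show ?thesis by auto
  qed
  define Q where "Q = P + Bm"
  have Qc: "Q \<in> carrier_mat n n" unfolding Q_def using P Bmc by simp
  have Qnn: "nonneg_mat Q" using P Bmnn Bmc unfolding Q_def nonneg_mat_def by auto
  have rhoQ: "rho Q \<le> s"
  proof (rule rho_le[OF Qc n])
    fix z l assume ev: "eigenvector (map_mat complex_of_real Q) z l"
    then have zc: "z \<in> carrier_vec n" and z0: "z \<noteq> 0\<^sub>v n" and zeq: "map_mat complex_of_real Q *\<^sub>v z = l \<cdot>\<^sub>v z"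
      unfolding eigenvector_def using Qc by auto
    show "cmod l \<le> s"
    proof (rule ccontr)
      assume "\<not> cmod l \<le> s"
      then have ls: "cmod l > s" by simp
      define u where "u = vec n (\<lambda>j. cmod (z $ j))"
      have u: "u \<in> carrier_vec n" "\<forall>i<n. 0 \<le> u $ i" "u \<noteq> 0\<^sub>v n" using absv[OF zc z0] unfolding u_def by auto
      have ineq: "cmod l * u $ i \<le> (P *\<^sub>v u) $ i + (b xs u $ i + b u xs $ i)" if i: "i < n" for i
      proof -
        have "cmod l * u $ i = cmod ((map_mat complex_of_real Q *\<^sub>v z) $ i)"
          unfolding zeq u_def using i zc by (simp add: norm_mult)
        also have "\<dots> \<le> (Q *\<^sub>v u) $ i" unfolding u_def by (rule cbound[OF Qc Qnn zc i])
        also have "\<dots> = (P *\<^sub>v u) $ i + (Bm *\<^sub>v u) $ i"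
          unfolding Q_def using P Bmc u i by (simp add: add_mult_distrib_mat_vec[of _ n n])
        finally show ?thesis using Bmui[OF u(1) i] by simp
      qed
      show False
      proof (rule keyI[OF u], intro allI impI conjI)
        fix i assume i: "i < n"
        have pu: "0 \<le> (P *\<^sub>v u) $ i" by (rule Pv_nonneg[OF P u(1,2) i])
        have bu: "0 \<le> b xs u $ i + b u xs $ i" using Bmu0[OF u(1,2) i] Bmui[OF u(1) i] by simp
        have d: "(cmod l - s) * u $ i \<ge> 0" using ls u(2) i by simp
        show "0 \<le> b xs u $ i + b u xs $ i - s * u $ i + (P *\<^sub>v u) $ i"
          using ineq[OF i] d by (simp add: algebra_simps)
        assume r0: "b xs u $ i + b u xs $ i - s * u $ i + (P *\<^sub>v u) $ i = 0"
        then have "(cmod l - s) * u $ i \<le> 0" using ineq[OF i] by (simp add: algebra_simps)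
        then have "u $ i = 0" using d ls u(2) i by (simp add: mult_le_0_iff) (meson antisym)
        then show "b xs u $ i + b u xs $ i = 0" using r0 pu bu by simp
      qed
    qed
  qed
  have claimB: "M_matrix n (M - b_left n b xs - b_right n b xs)"
  proof -
    have e: "M - b_left n b xs - b_right n b xs = s \<cdot>\<^sub>m 1\<^sub>m n - Q"
      unfolding Meq Q_def Bm_def using P by (intro eq_matI) (auto simp: b_left_def b_right_def)
    show ?thesis unfolding M_matrix_def e using Qc Qnn rhoQ by auto
  qed
  define T where "T = minv M * Bm"
  have Tc: "T \<in> carrier_mat n n" unfolding T_def using mi(1) Bmc by simp
  have rhoT: "rho T \<le> 1"
  proof (rule rho_le[OF Tc n])
    fix z l assume ev: "eigenvector (map_mat complex_of_real T) z l"
    then have zc: "z \<in> carrier_vec n" and z0: "z \<noteq> 0\<^sub>v n" and zeq: "map_mat complex_of_real T *\<^sub>v z = l \<cdot>\<^sub>v z"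
      unfolding eigenvector_def using Tc by auto
    let ?Mc = "map_mat complex_of_real M"
    let ?Pc = "map_mat complex_of_real P"
    let ?Bc = "map_mat complex_of_real Bm"
    have McT: "?Mc * map_mat complex_of_real T = ?Bc"
    proof -
      have "?Mc * map_mat complex_of_real T = map_mat complex_of_real (M * T)"
        using Mc Tc by (simp add: of_real_hom.mat_hom_mult)
      also have "M * T = (M * minv M) * Bm" unfolding T_def using Mc mi(1) Bmc by (simp add: assoc_mult_mat)
      also have "\<dots> = Bm" using mi(2) Bmc by simp
      finally show ?thesis .
    qed
    have Bz: "?Bc *\<^sub>v z = l \<cdot>\<^sub>v (?Mc *\<^sub>v z)"
    proof -
      have "?Bc *\<^sub>v z = ?Mc *\<^sub>v (map_mat complex_of_real T *\<^sub>v z)"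
        unfolding McT[symmetric] using Mc Tc zc by (simp add: assoc_mult_mat_vec[of _ n n _ n])
      also have "\<dots> = l \<cdot>\<^sub>v (?Mc *\<^sub>v z)" unfolding zeq using Mc zc by (simp add: mult_mat_vec[of _ n n])
      finally show ?thesis .
    qed
    have Mceq: "?Mc = complex_of_real s \<cdot>\<^sub>m 1\<^sub>m n - ?Pc" unfolding Meq using P by (intro eq_matI) auto
    show "cmod l \<le> 1"
    proof (rule ccontr)
      assume "\<not> cmod l \<le> 1"
      then have l1: "cmod l > 1" by simp
      define L where "L = cmod l"
      define u where "u = vec n (\<lambda>j. cmod (z $ j))"
      have u: "u \<in> carrier_vec n" "\<forall>i<n. 0 \<le> u $ i" "u \<noteq> 0\<^sub>v n" using absv[OF zc z0] unfolding u_def by auto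
      have ineq: "L * s * u $ i \<le> L * (P *\<^sub>v u) $ i + (Bm *\<^sub>v u) $ i" if i: "i < n" for i
      proof -
        have "(?Bc *\<^sub>v z) $ i = l * (complex_of_real s * z $ i - (?Pc *\<^sub>v z) $ i)"
          using Bz i Mc zc Mv_index[of ?Pc n z i "complex_of_real s"] P unfolding Mceq by simp
        then have e: "l * complex_of_real s * z $ i = l * (?Pc *\<^sub>v z) $ i + (?Bc *\<^sub>v z) $ i"
          by (simp add: algebra_simps)
        have "L * s * u $ i = cmod (l * complex_of_real s * z $ i)"
          unfolding L_def u_def using i spos by (simp add: norm_mult)
        also have "\<dots> \<le> cmod (l * (?Pc *\<^sub>v z) $ i) + cmod ((?Bc *\<^sub>v z) $ i)" unfolding e by (rule norm_triangle_ineq)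
        also have "\<dots> \<le> L * (P *\<^sub>v u) $ i + (Bm *\<^sub>v u) $ i"
          unfolding L_def norm_mult u_def
          using cbound[OF P zc i] cbound[OF Bmc Bmnn zc i] by (intro add_mono mult_left_mono) auto
        finally show ?thesis .
      qed
      show False
      proof (rule keyI[OF u], intro allI impI conjI)
        fix i assume i: "i < n"
        define R where "R = b xs u $ i + b u xs $ i - s * u $ i + (P *\<^sub>v u) $ i"
        have bu: "0 \<le> (Bm *\<^sub>v u) $ i" using Bmu0[OF u(1,2) i] .
        have LR: "L * R = L * (Bm *\<^sub>v u) $ i - L * s * u $ i + L * (P *\<^sub>v u) $ i"
          unfolding R_def Bmui[OF u(1) i] by (simp add: algebra_simps)
        have LR2: "L * R \<ge> (L - 1) * (Bm *\<^sub>v u) $ i" using LR ineq[OF i] by (simp add: algebra_simps)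
        have Lp: "L > 1" unfolding L_def using l1 .
        have "(L - 1) * (Bm *\<^sub>v u) $ i \<ge> 0" using Lp bu by simp
        then have "L * R \<ge> 0" using LR2 by linarith
        then show "0 \<le> b xs u $ i + b u xs $ i - s * u $ i + (P *\<^sub>v u) $ i"
          using Lp unfolding R_def[symmetric] by (simp add: zero_le_mult_iff)
        assume "b xs u $ i + b u xs $ i - s * u $ i + (P *\<^sub>v u) $ i = 0"
        then have "R = 0" unfolding R_def .
        then have "(L - 1) * (Bm *\<^sub>v u) $ i \<le> 0" using LR2 by simp
        then have "(Bm *\<^sub>v u) $ i \<le> 0" using Lp by (simp add: mult_le_0_iff)
        then show "b xs u $ i + b u xs $ i = 0" using bu Bmui[OF u(1) i] by simp
      qed
    qed
  qed
  show ?thesis using rhoT claimB unfolding T_def Bm_def by simp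
qed

end
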